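(* Let $\mathcal{D}$ be the class of all finite digraphs and let $D\in\mathcal{D}$. The class $\mathrm{Av}(D)=\{E\in\mathcal{D}: D\not\preceq E\}$, with respect to the strong homomorphic image ordering $\preceq$, is well quasi-ordered if and only if $D$ is isomorphic to the complete digraph $\overrightarrow{K}_n$ for some $n\ge1$.
   Context: A digraph is a set $D$ with a binary relation $E(D)\subseteq D\times D$ (loops allowed). $\overrightarrow{K}_n$ is the digraph on $\{1,\dots,n\}$ with edge set $\{(i,j):1\le i,j\le n\}$ (all ordered pairs, including loops). A homomorphism maps edges to edges; it is strong if additionally every edge of the target between vertices of the image is the image of an edge. Strong homomorphic image ordering: $A\preceq B$ iff there is a surjective strong homomorphism $B\to A$. Well quasi-ordered means no infinite strictly decreasing sequence and no infinite antichain; digraphs considered up to isomorphism. *)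

theory Defs
  imports Main
begin

text \<open>A (finite) digraph is represented concretely by a vertex set of naturals and an
  edge relation on it (loops allowed). Every finite digraph is isomorphic to one of these.\<close>

type_synonym dg = "nat set \<times> (nat \<times> nat) set"

definition verts :: "dg \<Rightarrow> nat set" where "verts G = fst G"
definition arcs :: "dg \<Rightarrow> (nat \<times> nat) set" where "arcs G = snd G"

definition finite_digraph :: "dg \<Rightarrow> bool" where
  "finite_digraph G \<longleftrightarrow> finite (verts G) \<and> arcs G \<subseteq> verts G \<times> verts G"

definition strong_hom :: "dg \<Rightarrow> dg \<Rightarrow> (nat \<Rightarrow> nat) \<Rightarrow> bool" where
  "strong_hom G H f \<longleftrightarrow>
     (\<forall>x\<in>verts G. f x \<in> verts H) \<and>
     (\<forall>x y. (x, y) \<in> arcs G \<longrightarrow> (f x, f y) \<in> arcs H) \<and>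
     (\<forall>u\<in>f ` verts G. \<forall>v\<in>f ` verts G. (u, v) \<in> arcs H \<longrightarrow>
        (\<exists>x y. (x, y) \<in> arcs G \<and> f x = u \<and> f y = v))"

definition shi_le :: "dg \<Rightarrow> dg \<Rightarrow> bool" where
  "shi_le A B \<longleftrightarrow> (\<exists>f. strong_hom B A f \<and> f ` verts B = verts A)"

definition dg_iso :: "dg \<Rightarrow> dg \<Rightarrow> bool" where
  "dg_iso A B \<longleftrightarrow> (\<exists>f. bij_betw f (verts A) (verts B) \<and>
     (\<forall>x\<in>verts A. \<forall>y\<in>verts A. (x, y) \<in> arcs A \<longleftrightarrow> (f x, f y) \<in> arcs B))"

definition complete_digraph :: "nat \<Rightarrow> dg" where
  "complete_digraph n = ({1..n}, {1..n} \<times> {1..n})"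

definition Av :: "dg \<Rightarrow> dg set" where
  "Av D = {E. finite_digraph E \<and> \<not> shi_le D E}"

definition dg_wqo_class :: "dg set \<Rightarrow> bool" where
  "dg_wqo_class C \<longleftrightarrow>
     \<not> (\<exists>s :: nat \<Rightarrow> dg. (\<forall>i. s i \<in> C) \<and> (\<forall>i. shi_le (s (Suc i)) (s i) \<and> \<not> shi_le (s i) (s (Suc i)))) \<and>
     \<not> (\<exists>s :: nat \<Rightarrow> dg. (\<forall>i. s i \<in> C) \<and> (\<forall>i j. i \<noteq> j \<longrightarrow> \<not> shi_le (s i) (s j)))"

end

theory Submission
  imports Defs "HOL-Library.Ramsey" "HOL-Library.Infinite_Set"
begin


definition cyc :: "bool \<Rightarrow> nat \<Rightarrow> dg" where
  "cyc l m = ({..<m}, {(x,y). x < m \<and> y < m \<and> y \<noteq> Suc x mod m \<and> (l \<or> x \<noteq> y)})"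

lemma cyc_verts[simp]: "verts (cyc l m) = {..<m}" by (simp add: cyc_def verts_def)
lemma cyc_arcs: "(x,y) \<in> arcs (cyc l m) \<longleftrightarrow> x < m \<and> y < m \<and> y \<noteq> Suc x mod m \<and> (l \<or> x \<noteq> y)"
  by (simp add: cyc_def arcs_def)

lemma cyc_fd: "finite_digraph (cyc l m)"
  by (auto simp: finite_digraph_def cyc_arcs)

lemma suc_mod: "x < m \<Longrightarrow> Suc x mod m = (if Suc x = m then 0 else Suc x)"
  by auto

lemma suc_mod_inj: "x < m \<Longrightarrow> x' < m \<Longrightarrow> Suc x mod m = Suc x' mod m \<Longrightarrow> x = x'"
  by (simp add: suc_mod split: if_splits)

lemma suc_mod_ne: "3 \<le> m \<Longrightarrow> x < m \<Longrightarrow> Suc x mod m \<noteq> x"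
  by (simp add: suc_mod)

lemma cyc_rigid:
  assumes "3 \<le> m" "3 \<le> k" "shi_le (cyc l k) (cyc l' m)"
  shows "m = k"
proof -
  obtain f where sh: "strong_hom (cyc l' m) (cyc l k) f" and su: "f ` {..<m} = {..<k}"
    using assms(3) by (auto simp: shi_le_def)
  have E: "\<And>x y. (x,y) \<in> arcs (cyc l' m) \<Longrightarrow> (f x, f y) \<in> arcs (cyc l k)"
    using sh by (auto simp: strong_hom_def)
  have "inj_on f {..<m}"
  proof (rule inj_onI, rule ccontr)
    fix x x' assume x: "x \<in> {..<m}" and x': "x' \<in> {..<m}" and eq: "f x = f x'" and ne: "x \<noteq> x'"
    define b where "b = f x"
    have bk: "b < k" using su x b_def by auto
    define b' where "b' = Suc b mod k"
    have b'k: "b' < k" using assms(2) b'_def by auto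
    have nb: "(b, b') \<notin> arcs (cyc l k)" by (simp add: cyc_arcs b'_def)
    have bb: "b' \<noteq> b" using suc_mod_ne[OF assms(2) bk] b'_def by simp
    have "b' \<in> f ` {..<m}" using b'k su by simp
    then obtain y where y: "y < m" "f y = b'" by auto
    have "(x,y) \<notin> arcs (cyc l' m)"
    proof
      assume "(x,y) \<in> arcs (cyc l' m)"
      then have "(f x, f y) \<in> arcs (cyc l k)" by (rule E)
      then show False using nb y b_def by simp
    qed
    moreover have "x \<noteq> y" using y bb b_def by auto
    ultimately have 1: "y = Suc x mod m" using x y by (auto simp: cyc_arcs)
    have "(x',y) \<notin> arcs (cyc l' m)"
    proof
      assume "(x',y) \<in> arcs (cyc l' m)"
      then have "(f x', f y) \<in> arcs (cyc l k)" by (rule E)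
      then show False using nb y b_def eq by simp
    qed
    moreover have "x' \<noteq> y" using y bb b_def eq by auto
    ultimately have 2: "y = Suc x' mod m" using x' y by (auto simp: cyc_arcs)
    from 1 2 x x' have "x = x'" using suc_mod_inj by auto
    with ne show False by simp
  qed
  then have "card (f ` {..<m}) = m" by (simp add: card_image)
  then show ?thesis using su by simp
qed

lemma cyc_antichain:
  "\<forall>i j. i \<noteq> j \<longrightarrow> \<not> shi_le (cyc l (i+3)) (cyc l (j+3))"
proof (intro allI impI notI)
  fix i j :: nat assume "i \<noteq> j" "shi_le (cyc l (i+3)) (cyc l (j+3))"
  then show False using cyc_rigid[of "j+3" "i+3" l l] by simp
qed

lemma not_wqo_of_antichain:
  fixes s :: "nat \<Rightarrow> dg"
  assumes "\<forall>i. s i \<in> C" "\<forall>i j. i \<noteq> j \<longrightarrow> \<not> shi_le (s i) (s j)"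
  shows "\<not> dg_wqo_class C"
proof -
  have "\<exists>s::nat\<Rightarrow>dg. (\<forall>i. s i \<in> C) \<and> (\<forall>i j. i \<noteq> j \<longrightarrow> \<not> shi_le (s i) (s j))"
    using assms by blast
  then show ?thesis unfolding dg_wqo_class_def by simp
qed

lemma partB:
  assumes fd: "finite_digraph D" and ni: "\<not> (\<exists>n\<ge>1. dg_iso D (complete_digraph n))"
  shows "\<not> dg_wqo_class (Av D)"
proof -
  have ac: "\<not> dg_wqo_class (Av D)" if "\<forall>m\<ge>3. \<not> shi_le D (cyc l m)" for l
  proof (rule not_wqo_of_antichain[of "\<lambda>i. cyc l (i+3)"])
    show "\<forall>i. cyc l (i + 3) \<in> Av D" using that by (simp add: Av_def cyc_fd)
    show "\<forall>i j. i \<noteq> j \<longrightarrow> \<not> shi_le (cyc l (i + 3)) (cyc l (j + 3))" by (rule cyc_antichain)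
  qed
  consider (emp) "verts D = {}" | (nl) "\<exists>d\<in>verts D. (d,d) \<notin> arcs D"
    | (ne) "\<forall>d\<in>verts D. (d,d) \<in> arcs D" "\<exists>a\<in>verts D. \<exists>b\<in>verts D. a \<noteq> b \<and> (a,b) \<notin> arcs D"
    | (cp) "verts D \<noteq> {}" "\<forall>a\<in>verts D. \<forall>b\<in>verts D. (a,b) \<in> arcs D"
  proof (cases "verts D = {}")
    case True show ?thesis by (rule that(1)[OF True])
  next
    case F1: False
    show ?thesis
    proof (cases "\<exists>d\<in>verts D. (d,d) \<notin> arcs D")
      case True show ?thesis by (rule that(2)[OF True])
    next
      case F2: False
      show ?thesis
      proof (cases "\<exists>a\<in>verts D. \<exists>b\<in>verts D. a \<noteq> b \<and> (a,b) \<notin> arcs D")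
        case True
        have "\<forall>d\<in>verts D. (d,d) \<in> arcs D" using F2 by simp
        then show ?thesis using True that(3) by simp
      next
        case False
        have "\<forall>a\<in>verts D. \<forall>b\<in>verts D. (a,b) \<in> arcs D"
        proof (intro ballI)
          fix a b assume "a \<in> verts D" "b \<in> verts D"
          then show "(a,b) \<in> arcs D" using F2 False by (cases "a = b") auto
        qed
        then show ?thesis using F1 that(4) by simp
      qed
    qed
  qed
  then show ?thesis
  proof cases
    case emp
    show ?thesis
    proof (rule ac[of True], intro allI impI notI)
      fix m :: nat assume "3 \<le> m" "shi_le D (cyc True m)"
      then show False using emp by (auto simp: shi_le_def lessThan_empty_iff)
    qed
  next
    case nl
    show ?thesis
    proof (rule ac[of True], intro allI impI notI)
      fix m :: nat assume m: "3 \<le> m" and "shi_le D (cyc True m)"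
      then obtain f where sh: "strong_hom (cyc True m) D f" and su: "f ` {..<m} = verts D"
        by (auto simp: shi_le_def)
      from nl obtain d where d: "d \<in> verts D" "(d,d) \<notin> arcs D" by blast
      have "d \<in> f ` {..<m}" using su d by simp
      then obtain x where x: "x < m" "f x = d" by auto
      have "(x,x) \<in> arcs (cyc True m)" using x suc_mod_ne[OF m x(1)] by (simp add: cyc_arcs)
      then have "(f x, f x) \<in> arcs D" using sh unfolding strong_hom_def by blast
      then show False using x d by simp
    qed
  next
    case ne
    show ?thesis
    proof (rule ac[of False], intro allI impI notI)
      fix m :: nat assume m: "3 \<le> m" and "shi_le D (cyc False m)"
      then obtain f where sh: "strong_hom (cyc False m) D f" and su: "f ` {..<m} = verts D"
        by (auto simp: shi_le_def)
      have E: "\<And>x y. (x,y) \<in> arcs (cyc False m) \<Longrightarrow> (f x, f y) \<in> arcs D"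
        using sh by (auto simp: strong_hom_def)
      from ne obtain a b where ab: "a \<in> verts D" "b \<in> verts D" "a \<noteq> b" "(a,b) \<notin> arcs D" by blast
      have "b \<in> f ` {..<m}" using su ab by simp
      then obtain y where y: "y < m" "f y = b" by auto
      have "(a,a) \<in> arcs D" using ne ab by blast
      then obtain x1 y1 where x1: "(x1,y1) \<in> arcs (cyc False m)" "f x1 = a" "f y1 = a"
      proof -
        have ha: "a \<in> f ` verts (cyc False m)" using su ab(1) by simp
        have C3: "\<forall>u\<in>f ` verts (cyc False m). \<forall>v\<in>f ` verts (cyc False m). (u, v) \<in> arcs D \<longrightarrow>
           (\<exists>x y. (x, y) \<in> arcs (cyc False m) \<and> f x = u \<and> f y = v)"
          using sh unfolding strong_hom_def by (elim conjE)
        have "\<exists>x y. (x, y) \<in> arcs (cyc False m) \<and> f x = a \<and> f y = a"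
          using C3 ha \<open>(a,a) \<in> arcs D\<close> by blast
        then show ?thesis using that by blast
      qed
      have x1m: "x1 < m" "y1 < m" "x1 \<noteq> y1" using x1 by (auto simp: cyc_arcs)
      have "x1 \<noteq> y" "y1 \<noteq> y" using x1 y ab by auto
      have "(x1,y) \<notin> arcs (cyc False m)"
      proof
        assume "(x1,y) \<in> arcs (cyc False m)"
        then have "(f x1, f y) \<in> arcs D" by (rule E)
        then show False using x1 y ab by simp
      qed
      then have "y = Suc x1 mod m" using x1m y \<open>x1 \<noteq> y\<close> by (auto simp: cyc_arcs)
      moreover have "(y1,y) \<notin> arcs (cyc False m)"
      proof
        assume "(y1,y) \<in> arcs (cyc False m)"
        then have "(f y1, f y) \<in> arcs D" by (rule E)
        then show False using x1 y ab by simp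
      qed
      then have "y = Suc y1 mod m" using x1m y \<open>y1 \<noteq> y\<close> by (auto simp: cyc_arcs)
      ultimately show False using suc_mod_inj[of x1 m y1] x1m by simp
    qed
  next
    case cp
    have fin: "finite (verts D)" using fd unfolding finite_digraph_def by blast
    define n where "n = card (verts D)"
    have "n \<noteq> 0" using cp(1) fin n_def by simp
    then have n1: "n \<ge> 1" by simp
    have "card (verts D) = card {1..n}" using n_def by simp
    then obtain g where g: "bij_betw g (verts D) {1..n}"
      using finite_same_card_bij[OF fin finite_atLeastAtMost] by blast
    have vK: "verts (complete_digraph n) = {1..n}" and aK: "arcs (complete_digraph n) = {1..n} \<times> {1..n}"
      by (simp_all add: complete_digraph_def verts_def arcs_def)
    have gm: "\<forall>x\<in>verts D. g x \<in> {1..n}" using bij_betwE[OF g] .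
    have "dg_iso D (complete_digraph n)"
      unfolding dg_iso_def vK aK
    proof (rule exI[of _ g], intro conjI ballI)
      show "bij_betw g (verts D) {1..n}" by (rule g)
      fix x y assume "x \<in> verts D" "y \<in> verts D"
      then show "((x, y) \<in> arcs D) = ((g x, g y) \<in> {1..n} \<times> {1..n})" using gm cp by simp
    qed
    then show ?thesis using ni n1 by blast
  qed
qed



definition vtyp :: "dg \<Rightarrow> (nat \<Rightarrow> nat) \<Rightarrow> nat \<Rightarrow> nat \<Rightarrow> bool \<times> nat set \<times> nat set" where
  "vtyp E g k v = ((v,v) \<in> arcs E, {i. i < k \<and> (g i, v) \<in> arcs E}, {i. i < k \<and> (v, g i) \<in> arcs E})"

definition vcls :: "dg \<Rightarrow> nat set \<Rightarrow> (nat \<Rightarrow> nat) \<Rightarrow> nat \<Rightarrow> bool \<times> nat set \<times> nat set \<Rightarrow> nat set" where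
  "vcls E S g k t = {v \<in> verts E - S. vtyp E g k v = t}"

definition cover :: "dg \<Rightarrow> nat set \<Rightarrow> bool" where
  "cover E S \<longleftrightarrow> finite S \<and> S \<subseteq> verts E \<and> (\<forall>x y. (x,y) \<in> arcs E \<longrightarrow> x \<noteq> y \<longrightarrow> x \<in> S \<or> y \<in> S)"

lemma surj_exists:
  assumes "finite A" "finite B" "card B \<le> card A" "B = {} \<Longrightarrow> A = {}"
  shows "\<exists>\<sigma>. \<sigma> ` A = B"
proof (cases "B = {}")
  case True then show ?thesis using assms(4) by simp
next
  case False
  then obtain b0 where b0: "b0 \<in> B" by blast
  obtain C where C: "C \<subseteq> A" "card C = card B"
    using obtain_subset_with_card_n[OF assms(3)] by metis
  have fC: "finite C" using C(1) assms(1) finite_subset by blast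
  obtain h where h: "bij_betw h C B" using finite_same_card_bij[OF fC assms(2) C(2)] by blast
  define \<sigma> where "\<sigma> x = (if x \<in> C then h x else b0)" for x
  have "\<sigma> ` A = B"
  proof
    show "\<sigma> ` A \<subseteq> B" using h b0 by (auto simp: \<sigma>_def bij_betw_def)
    show "B \<subseteq> \<sigma> ` A"
    proof
      fix b assume "b \<in> B"
      then obtain c where "c \<in> C" "h c = b" using h by (auto simp: bij_betw_def)
      then show "b \<in> \<sigma> ` A" using C(1) by (auto simp: \<sigma>_def intro!: image_eqI[of _ _ c])
    qed
  qed
  then show ?thesis by blast
qed

lemma compare:
  assumes fE: "finite_digraph E" and fE': "finite_digraph E'"
    and cS: "cover E S" and cS': "cover E' S'"
    and g: "bij_betw g {..<k} S" and g': "bij_betw g' {..<k} S'"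
    and R: "\<forall>i<k. \<forall>j<k. (g i, g j) \<in> arcs E \<longleftrightarrow> (g' i, g' j) \<in> arcs E'"
    and C: "\<forall>t. card (vcls E S g k t) \<le> card (vcls E' S' g' k t) \<and>
                 (vcls E S g k t = {} \<longleftrightarrow> vcls E' S' g' k t = {})"
  shows "shi_le E E'"
proof -
  have finE: "finite (verts E)" and aE: "arcs E \<subseteq> verts E \<times> verts E"
    using fE unfolding finite_digraph_def by blast+
  have finE': "finite (verts E')" and aE': "arcs E' \<subseteq> verts E' \<times> verts E'"
    using fE' unfolding finite_digraph_def by blast+
  have SE: "S \<subseteq> verts E" and covE: "\<And>x y. (x,y) \<in> arcs E \<Longrightarrow> x \<noteq> y \<Longrightarrow> x \<in> S \<or> y \<in> S"
    using cS unfolding cover_def by blast+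
  have SE': "S' \<subseteq> verts E'" and covE': "\<And>x y. (x,y) \<in> arcs E' \<Longrightarrow> x \<noteq> y \<Longrightarrow> x \<in> S' \<or> y \<in> S'"
    using cS' unfolding cover_def by blast+
  have "\<forall>t. \<exists>\<sigma>. \<sigma> ` vcls E' S' g' k t = vcls E S g k t"
  proof
    fix t
    show "\<exists>\<sigma>. \<sigma> ` vcls E' S' g' k t = vcls E S g k t"
    proof (rule surj_exists)
      show "finite (vcls E' S' g' k t)" using finE' by (simp add: vcls_def)
      show "finite (vcls E S g k t)" using finE by (simp add: vcls_def)
      show "card (vcls E S g k t) \<le> card (vcls E' S' g' k t)" using C by blast
      show "vcls E S g k t = {} \<Longrightarrow> vcls E' S' g' k t = {}" using C by blast
    qed
  qed
  then obtain \<sigma> where \<sigma>: "\<And>t. \<sigma> t ` vcls E' S' g' k t = vcls E S g k t" by metis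
  define f where "f v = (if v \<in> S' then g (inv_into {..<k} g' v) else \<sigma> (vtyp E' g' k v) v)" for v
  have F1: "f (g' i) = g i" if "i < k" for i
  proof -
    have "g' i \<in> S'" using g' that by (auto simp: bij_betw_def)
    moreover have "inv_into {..<k} g' (g' i) = i" using g' that by (simp add: bij_betw_def)
    ultimately show ?thesis by (simp add: f_def)
  qed
  have gS: "\<And>v. v \<in> S \<Longrightarrow> \<exists>i<k. g i = v" using g by (auto simp: bij_betw_def)
  have gS': "\<And>v. v \<in> S' \<Longrightarrow> \<exists>i<k. g' i = v" using g' by (auto simp: bij_betw_def)
  have gin: "\<And>i. i < k \<Longrightarrow> g i \<in> S" using g by (auto simp: bij_betw_def)
  have gin': "\<And>i. i < k \<Longrightarrow> g' i \<in> S'" using g' by (auto simp: bij_betw_def)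
  have F2: "f v \<in> verts E - S \<and> vtyp E g k (f v) = vtyp E' g' k v" if "v \<in> verts E' - S'" for v
  proof -
    have "v \<in> vcls E' S' g' k (vtyp E' g' k v)" using that by (simp add: vcls_def)
    then have "\<sigma> (vtyp E' g' k v) v \<in> vcls E S g k (vtyp E' g' k v)" using \<sigma> by blast
    moreover have "f v = \<sigma> (vtyp E' g' k v) v" using that by (simp add: f_def)
    ultimately show ?thesis by (simp add: vcls_def)
  qed
  have F3: "\<exists>v'\<in>verts E' - S'. f v' = v \<and> vtyp E' g' k v' = vtyp E g k v" if "v \<in> verts E - S" for v
  proof -
    have "v \<in> vcls E S g k (vtyp E g k v)" using that by (simp add: vcls_def)
    then obtain v' where v': "v' \<in> vcls E' S' g' k (vtyp E g k v)" "\<sigma> (vtyp E g k v) v' = v"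
      using \<sigma> by (metis imageE)
    then have "v' \<in> verts E' - S'" "vtyp E' g' k v' = vtyp E g k v" by (simp_all add: vcls_def)
    moreover have "f v' = v" using v' calculation by (simp add: f_def)
    ultimately show ?thesis by blast
  qed
  have C1: "f v \<in> verts E" if "v \<in> verts E'" for v
  proof (cases "v \<in> S'")
    case True
    then obtain i where "i < k" "g' i = v" using gS' by blast
    then show ?thesis using F1 gin SE by auto
  next
    case False then show ?thesis using F2 that by blast
  qed
  have C2: "(f x, f y) \<in> arcs E" if xy: "(x,y) \<in> arcs E'" for x y
  proof -
    have xv: "x \<in> verts E'" "y \<in> verts E'" using xy aE' by auto
    show ?thesis
    proof (cases "x \<in> S'")
      case xS: True
      then obtain i where i: "i < k" "g' i = x" using gS' by blast
      show ?thesis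
      proof (cases "y \<in> S'")
        case True
        then obtain j where j: "j < k" "g' j = y" using gS' by blast
        then show ?thesis using i R xy F1 by auto
      next
        case False
        then have yv: "y \<in> verts E' - S'" using xv by blast
        have "i \<in> fst (snd (vtyp E' g' k y))" using i xy by (simp add: vtyp_def)
        then have "i \<in> fst (snd (vtyp E g k (f y)))" using F2[OF yv] by simp
        moreover have "f x = g i" using F1 i by metis
        ultimately show ?thesis by (simp add: vtyp_def)
      qed
    next
      case xS: False
      then have xv2: "x \<in> verts E' - S'" using xv by blast
      show ?thesis
      proof (cases "y \<in> S'")
        case True
        then obtain j where j: "j < k" "g' j = y" using gS' by blast
        have "j \<in> snd (snd (vtyp E' g' k x))" using j xy by (simp add: vtyp_def)
        then have "j \<in> snd (snd (vtyp E g k (f x)))" using F2[OF xv2] by simp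
        moreover have "f y = g j" using F1 j by metis
        ultimately show ?thesis by (simp add: vtyp_def)
      next
        case False
        then have "x = y" using covE' xy xS by blast
        then have "fst (vtyp E' g' k x)" using xy by (simp add: vtyp_def)
        then have "fst (vtyp E g k (f x))" using F2[OF xv2] by simp
        then show ?thesis using \<open>x = y\<close> by (simp add: vtyp_def)
      qed
    qed
  qed
  have C3: "\<exists>x y. (x, y) \<in> arcs E' \<and> f x = u \<and> f y = v"
    if uv: "u \<in> verts E" "v \<in> verts E" "(u,v) \<in> arcs E" for u v
  proof (cases "u \<in> S")
    case uS: True
    then obtain i where i: "i < k" "g i = u" using gS by blast
    show ?thesis
    proof (cases "v \<in> S")
      case True
      then obtain j where j: "j < k" "g j = v" using gS by blast
      have "(g' i, g' j) \<in> arcs E'" using R i j uv by auto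
      then show ?thesis using F1 i j by blast
    next
      case False
      then have v2: "v \<in> verts E - S" using uv by blast
      obtain v' where v': "v' \<in> verts E' - S'" "f v' = v" "vtyp E' g' k v' = vtyp E g k v"
        using F3[OF v2] by blast
      have "i \<in> fst (snd (vtyp E g k v))" using i uv by (simp add: vtyp_def)
      then have "i \<in> fst (snd (vtyp E' g' k v'))" using v' by simp
      then have "(g' i, v') \<in> arcs E'" by (simp add: vtyp_def)
      then show ?thesis using F1 i v' by blast
    qed
  next
    case uS: False
    then have u2: "u \<in> verts E - S" using uv by blast
    obtain u' where u': "u' \<in> verts E' - S'" "f u' = u" "vtyp E' g' k u' = vtyp E g k u"
      using F3[OF u2] by blast
    show ?thesis
    proof (cases "v \<in> S")
      case True
      then obtain j where j: "j < k" "g j = v" using gS by blast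
      have "j \<in> snd (snd (vtyp E g k u))" using j uv by (simp add: vtyp_def)
      then have "j \<in> snd (snd (vtyp E' g' k u'))" using u' by simp
      then have "(u', g' j) \<in> arcs E'" by (simp add: vtyp_def)
      then show ?thesis using F1 j u' by blast
    next
      case False
      then have "u = v" using covE uv uS by blast
      have "fst (vtyp E g k u)" using uv \<open>u = v\<close> by (simp add: vtyp_def)
      then have "fst (vtyp E' g' k u')" using u' by simp
      then have "(u', u') \<in> arcs E'" by (simp add: vtyp_def)
      then show ?thesis using u' \<open>u = v\<close> by blast
    qed
  qed
  have SU: "f ` verts E' = verts E"
  proof
    show "f ` verts E' \<subseteq> verts E" using C1 by blast
    show "verts E \<subseteq> f ` verts E'"
    proof
      fix v assume v: "v \<in> verts E"
      show "v \<in> f ` verts E'"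
      proof (cases "v \<in> S")
        case True
        then obtain i where i: "i < k" "g i = v" using gS by blast
        then have "g' i \<in> verts E'" using gin' SE' by blast
        then show ?thesis using F1 i by (metis image_eqI)
      next
        case False
        then show ?thesis using F3 v by blast
      qed
    qed
  qed
  have "strong_hom E' E f"
    unfolding strong_hom_def using C1 C2 C3 SU by blast
  then show ?thesis using SU unfolding shi_le_def by blast
qed

lemma match_big:
  assumes fE: "finite_digraph E" and V: "arcs D = verts D \<times> verts D" "card (verts D) = n" "n \<ge> 1"
    and fD: "finite (verts D)"
    and L: "length xs = n*n" "length ys = n*n" "distinct (xs @ ys)"
    and A: "\<forall>i<n*n. (xs!i, ys!i) \<in> arcs E"
  shows "shi_le D E"
proof -
  let ?V = "verts D"
  have aE: "arcs E \<subseteq> verts E \<times> verts E" using fE unfolding finite_digraph_def by blast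
  have "card (?V \<times> ?V) = card {..<n*n}" using V by (simp add: card_cartesian_product)
  then obtain p where p: "bij_betw p {..<n*n} (?V \<times> ?V)"
    using finite_same_card_bij[OF finite_lessThan, of "?V \<times> ?V"] fD by (metis finite_SigmaI)
  have "?V \<noteq> {}" using V by auto
  then obtain u0 where u0: "u0 \<in> ?V" by blast
  define f where "f z = (if z \<in> set xs then fst (p (inv_into {..<n*n} ((!) xs) z))
      else if z \<in> set ys then snd (p (inv_into {..<n*n} ((!) ys) z)) else u0)" for z
  have dx: "distinct xs" and dy: "distinct ys" and dxy: "set xs \<inter> set ys = {}" using L(3) by auto
  have injx: "inj_on ((!) xs) {..<n*n}" using dx L(1) by (simp add: inj_on_def nth_eq_iff_index_eq)
  have injy: "inj_on ((!) ys) {..<n*n}" using dy L(2) by (simp add: inj_on_def nth_eq_iff_index_eq)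
  have fx: "f (xs!i) = fst (p i)" if "i < n*n" for i
  proof -
    have "xs!i \<in> set xs" using that L(1) by simp
    moreover have "inv_into {..<n*n} ((!) xs) (xs!i) = i" using injx that by simp
    ultimately show ?thesis by (simp add: f_def)
  qed
  have fy: "f (ys!i) = snd (p i)" if "i < n*n" for i
  proof -
    have "ys!i \<in> set ys" using that L(2) by simp
    then have "ys!i \<notin> set xs" using dxy by blast
    moreover have "inv_into {..<n*n} ((!) ys) (ys!i) = i" using injy that by simp
    ultimately show ?thesis using \<open>ys!i \<in> set ys\<close> by (simp add: f_def)
  qed
  have pin: "\<And>i. i < n*n \<Longrightarrow> p i \<in> ?V \<times> ?V" using p by (auto simp: bij_betw_def)
  have C1: "f z \<in> ?V" for z
  proof -
    have "z \<in> set xs \<Longrightarrow> inv_into {..<n*n} ((!) xs) z < n*n"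
      using L(1) by (metis in_set_conv_nth inv_into_into lessThan_iff imageI)
    moreover have "z \<in> set ys \<Longrightarrow> inv_into {..<n*n} ((!) ys) z < n*n"
      using L(2) by (metis in_set_conv_nth inv_into_into lessThan_iff imageI)
    ultimately show ?thesis using pin u0 unfolding f_def by (auto simp: mem_Times_iff)
  qed
  have pre: "\<exists>i<n*n. p i = (u,v)" if "u \<in> ?V" "v \<in> ?V" for u v
  proof -
    have "(u,v) \<in> p ` {..<n*n}" using p that by (simp add: bij_betw_def)
    then show ?thesis by force
  qed
  have SU: "f ` verts E = ?V"
  proof
    show "f ` verts E \<subseteq> ?V" using C1 by blast
    show "?V \<subseteq> f ` verts E"
    proof
      fix u assume u: "u \<in> ?V"
      obtain i where i: "i < n*n" "p i = (u,u)" using pre[OF u u] by blast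
      have "xs!i \<in> verts E" using A i aE by blast
      moreover have "f (xs!i) = u" using fx i by simp
      ultimately show "u \<in> f ` verts E" by blast
    qed
  qed
  have "strong_hom E D f"
    unfolding strong_hom_def
  proof (intro conjI ballI allI impI)
    show "\<And>x. f x \<in> ?V" by (rule C1)
    show "\<And>x y. (f x, f y) \<in> arcs D" using C1 V by simp
    fix u v assume uv: "u \<in> f ` verts E" "v \<in> f ` verts E" "(u,v) \<in> arcs D"
    then obtain i where i: "i < n*n" "p i = (u,v)" using pre SU by blast
    then show "\<exists>x y. (x, y) \<in> arcs E \<and> f x = u \<and> f y = v"
      using A fx fy by (metis fst_conv snd_conv)
  qed
  then show ?thesis using SU unfolding shi_le_def by blast
qed

lemma greedy:
  assumes fE: "finite_digraph E"
  shows "(\<exists>xs ys. length xs = k \<and> length ys = k \<and> distinct (xs @ ys) \<and> (\<forall>i<k. (xs!i, ys!i) \<in> arcs E))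
     \<or> (\<exists>S. cover E S \<and> card S < 2*k)"
proof (induction k)
  case 0
  then show ?case by simp
next
  case (Suc k)
  show ?case
  proof (cases "\<exists>S. cover E S \<and> card S < 2*k")
    case True
    then show ?thesis by auto
  next
    case False
    then obtain xs ys where M: "length xs = k" "length ys = k" "distinct (xs @ ys)" "\<forall>i<k. (xs!i, ys!i) \<in> arcs E"
      using Suc.IH by blast
    define S where "S = set xs \<union> set ys"
    have cS: "card S = 2*k" using M by (simp add: S_def card_Un_disjoint distinct_card)
    have aE: "arcs E \<subseteq> verts E \<times> verts E" using fE unfolding finite_digraph_def by blast
    have SV: "S \<subseteq> verts E"
    proof
      fix z assume "z \<in> S"
      then obtain i where "i < k" "z = xs!i \<or> z = ys!i" using M unfolding S_def by (auto simp: in_set_conv_nth)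
      then show "z \<in> verts E" using M(4) aE by blast
    qed
    show ?thesis
    proof (cases "cover E S")
      case True
      then show ?thesis using cS by auto
    next
      case False
      then obtain x y where xy: "(x,y) \<in> arcs E" "x \<noteq> y" "x \<notin> S" "y \<notin> S"
        using SV unfolding cover_def S_def by auto
      have "length (xs@[x]) = Suc k \<and> length (ys@[y]) = Suc k \<and> distinct ((xs@[x]) @ (ys@[y]))
         \<and> (\<forall>i<Suc k. ((xs@[x])!i, (ys@[y])!i) \<in> arcs E)"
      proof (intro conjI allI impI)
        show "distinct ((xs@[x]) @ (ys@[y]))" using M(3) xy unfolding S_def by auto
        fix i assume "i < Suc k"
        then show "((xs@[x])!i, (ys@[y])!i) \<in> arcs E"
          using M xy by (cases "i < k") (auto simp: nth_append)
      qed (use M in auto)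
      then show ?thesis by blast
    qed
  qed
qed

lemma shi_le_card:
  assumes "finite_digraph B" "shi_le A B"
  shows "card (verts A) \<le> card (verts B)"
proof -
  obtain f where f: "f ` verts B = verts A" using assms(2) unfolding shi_le_def by blast
  have "finite (verts B)" using assms(1) unfolding finite_digraph_def by blast
  then have "card (f ` verts B) \<le> card (verts B)" by (rule card_image_le)
  then show ?thesis using f by simp
qed

lemma shi_le_eqcard:
  assumes fA: "finite_digraph A" and fB: "finite_digraph B" and le: "shi_le A B"
    and eq: "card (verts A) = card (verts B)"
  shows "shi_le B A"
proof -
  obtain f where sh: "strong_hom B A f" and su: "f ` verts B = verts A" using le unfolding shi_le_def by blast
  have finB: "finite (verts B)" and aB: "arcs B \<subseteq> verts B \<times> verts B" using fB unfolding finite_digraph_def by blast+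
  have aA: "arcs A \<subseteq> verts A \<times> verts A" using fA unfolding finite_digraph_def by blast
  have "card (f ` verts B) = card (verts B)" using eq su by simp
  then have inj: "inj_on f (verts B)" by (rule eq_card_imp_inj_on[OF finB])
  define g where "g = inv_into (verts B) f"
  have gf: "g (f x) = x" if "x \<in> verts B" for x using inj that by (simp add: g_def)
  have gin: "g u \<in> verts B" if "u \<in> verts A" for u
  proof -
    have "u \<in> f ` verts B" using su that by simp
    then show ?thesis unfolding g_def by (rule inv_into_into)
  qed
  have E: "\<And>x y. (x,y) \<in> arcs B \<Longrightarrow> (f x, f y) \<in> arcs A" using sh unfolding strong_hom_def by blast
  have C3: "\<forall>u\<in>f ` verts B. \<forall>v\<in>f ` verts B. (u, v) \<in> arcs A \<longrightarrow>
        (\<exists>x y. (x, y) \<in> arcs B \<and> f x = u \<and> f y = v)" using sh unfolding strong_hom_def by blast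
  have gsu: "g ` verts A = verts B"
  proof
    show "g ` verts A \<subseteq> verts B" using gin by blast
    show "verts B \<subseteq> g ` verts A"
    proof
      fix x assume "x \<in> verts B"
      then have "g (f x) = x" "f x \<in> verts A" using gf su by auto
      then show "x \<in> g ` verts A" by (metis imageI)
    qed
  qed
  have "strong_hom A B g"
    unfolding strong_hom_def
  proof (intro conjI ballI allI impI)
    show "\<And>x. x \<in> verts A \<Longrightarrow> g x \<in> verts B" by (rule gin)
    fix x y assume xy: "(x,y) \<in> arcs A"
    then have xv: "x \<in> f ` verts B" "y \<in> f ` verts B" using aA su by auto
    obtain x' y' where x'y': "(x', y') \<in> arcs B" "f x' = x" "f y' = y" using C3 xv xy by blast
    have "x' \<in> verts B" "y' \<in> verts B" using x'y' aB by auto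
    then show "(g x, g y) \<in> arcs B" using x'y' gf by auto
  next
    fix u v assume uv: "u \<in> g ` verts A" "v \<in> g ` verts A" "(u,v) \<in> arcs B"
    then have "u \<in> verts B" "v \<in> verts B" using gsu by auto
    then show "\<exists>x y. (x, y) \<in> arcs A \<and> g x = u \<and> g y = v" using E uv gf by blast
  qed
  then show ?thesis using gsu unfolding shi_le_def by blast
qed

lemma no_desc:
  fixes s :: "nat \<Rightarrow> dg"
  assumes fd: "\<forall>i. finite_digraph (s i)"
  shows "\<not> (\<forall>i. shi_le (s (Suc i)) (s i) \<and> \<not> shi_le (s i) (s (Suc i)))"
proof
  assume H: "\<forall>i. shi_le (s (Suc i)) (s i) \<and> \<not> shi_le (s i) (s (Suc i))"
  define c where "c i = card (verts (s i))" for i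
  have dec: "c (Suc i) < c i" for i
  proof -
    have "c (Suc i) \<le> c i" unfolding c_def using shi_le_card[of "s i" "s (Suc i)"] fd H by simp
    moreover have "c (Suc i) \<noteq> c i" unfolding c_def using shi_le_eqcard[of "s (Suc i)" "s i"] fd H by auto
    ultimately show ?thesis by simp
  qed
  have "c i + i \<le> c 0" for i
  proof (induction i)
    case 0 then show ?case by simp
  next
    case (Suc i) then show ?case using dec[of i] by simp
  qed
  from this[of "Suc (c 0)"] show False by simp
qed

lemma vcls_U:
  assumes "vcls E S g k t \<noteq> {}" "k \<le> K"
  shows "t \<in> (UNIV::bool set) \<times> Pow {..<K} \<times> Pow {..<K}"
proof -
  obtain v where "v \<in> vcls E S g k t" using assms(1) by blast
  then have "t = vtyp E g k v" by (simp add: vcls_def)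
  then show ?thesis using assms(2) by (auto simp: vtyp_def)
qed

lemma av_cover:
  assumes V: "arcs D = verts D \<times> verts D" "card (verts D) = n" "n \<ge> 1" "finite (verts D)"
    and E: "E \<in> Av D"
  shows "\<exists>S g. cover E S \<and> card S < 2*(n*n) \<and> bij_betw g {..<card S} S"
proof -
  have fE: "finite_digraph E" and nl: "\<not> shi_le D E" using E by (auto simp: Av_def)
  have "\<not> (\<exists>xs ys. length xs = n*n \<and> length ys = n*n \<and> distinct (xs @ ys) \<and> (\<forall>i<n*n. (xs!i, ys!i) \<in> arcs E))"
    using match_big[OF fE V(1) V(2) V(3) V(4)] nl by blast
  then obtain S where S: "cover E S" "card S < 2*(n*n)" using greedy[OF fE, of "n*n"] by blast
  have "finite S" using S(1) by (simp add: cover_def)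
  then obtain g where "bij_betw g {0..<card S} S" using ex_bij_betw_nat_finite by blast
  then have "bij_betw g {..<card S} S" by (simp add: lessThan_atLeast0)
  then show ?thesis using S by blast
qed

lemma no_antichain:
  fixes s :: "nat \<Rightarrow> dg"
  assumes V: "arcs D = verts D \<times> verts D" "card (verts D) = n" "n \<ge> 1" "finite (verts D)"
    and inAv: "\<forall>i. s i \<in> Av D" and AC: "\<forall>i j. i \<noteq> j \<longrightarrow> \<not> shi_le (s i) (s j)"
  shows False
proof -
  define K where "K = 2*(n*n)"
  have "\<forall>i. \<exists>p. cover (s i) (fst p) \<and> card (fst p) < K \<and> bij_betw (snd p) {..<card (fst p)} (fst p)"
  proof
    fix i
    obtain S g where "cover (s i) S \<and> card S < 2*(n*n) \<and> bij_betw g {..<card S} S"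
      using av_cover[OF V] inAv by blast
    then show "\<exists>p. cover (s i) (fst p) \<and> card (fst p) < K \<and> bij_betw (snd p) {..<card (fst p)} (fst p)"
      unfolding K_def by (intro exI[of _ "(S,g)"]) simp
  qed
  then obtain P where P: "\<And>i. cover (s i) (fst (P i)) \<and> card (fst (P i)) < K \<and> bij_betw (snd (P i)) {..<card (fst (P i))} (fst (P i))"
    by metis
  define Sf where "Sf i = fst (P i)" for i
  define gf where "gf i = snd (P i)" for i
  define kf where "kf i = card (Sf i)" for i
  have cov: "cover (s i) (Sf i)" for i using P[of i] unfolding Sf_def by blast
  have kK: "kf i < K" for i using P[of i] unfolding Sf_def kf_def by blast
  have gb: "bij_betw (gf i) {..<kf i} (Sf i)" for i using P[of i] unfolding Sf_def gf_def kf_def by blast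
  have fd: "finite_digraph (s i)" for i using inAv by (simp add: Av_def)
  define cl where "cl i t = vcls (s i) (Sf i) (gf i) (kf i) t" for i t
  define U where "U = (UNIV::bool set) \<times> Pow {..<K} \<times> Pow {..<K}"
  have clU: "cl i t = {}" if "t \<notin> U" for i t
    using vcls_U[of "s i" "Sf i" "gf i" "kf i" t K] kK[of i] that unfolding cl_def U_def by fastforce
  define Rf where "Rf i = {(a,b). a < kf i \<and> b < kf i \<and> (gf i a, gf i b) \<in> arcs (s i)}" for i
  define Pf where "Pf i = {t\<in>U. cl i t \<noteq> {}}" for i
  define col where "col i j = (kf i, Rf i, Pf i, {t\<in>U. card (cl i t) \<le> card (cl j t)})" for i j
  define Col where "Col = {..<K} \<times> Pow ({..<K} \<times> {..<K}) \<times> Pow U \<times> Pow U"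
  have finU: "finite U" unfolding U_def by simp
  have finCol: "finite Col" unfolding Col_def using finU by simp
  have colin: "col i j \<in> Col" for i j
  proof -
    have "Rf i \<subseteq> {..<K} \<times> {..<K}" using kK[of i] unfolding Rf_def by auto
    moreover have "Pf i \<subseteq> U" unfolding Pf_def by blast
    ultimately show ?thesis using kK[of i] unfolding col_def Col_def by auto
  qed
  obtain h where h: "bij_betw h Col {0..<card Col}" using ex_bij_betw_finite_nat[OF finCol] by blast
  define F where "F X = h (col (Min X) (Max X))" for X :: "nat set"
  have part: "\<forall>x\<in>(UNIV::nat set). \<forall>y\<in>UNIV. x \<noteq> y \<longrightarrow> F {x, y} < card Col"
  proof (intro ballI impI)
    fix x y :: nat
    have "h (col (Min {x,y}) (Max {x,y})) \<in> {0..<card Col}" using h colin by (auto simp: bij_betw_def)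
    then show "F {x, y} < card Col" unfolding F_def by simp
  qed
  obtain Y t0 where Y: "infinite Y" and hom: "\<forall>x\<in>Y. \<forall>y\<in>Y. x \<noteq> y \<longrightarrow> F {x, y} = t0"
    using Ramsey2[OF infinite_UNIV_nat part] by blast
  have injh: "inj_on h Col" using h by (simp add: bij_betw_def)
  have hom2: "col x y = col x' y'" if "x \<in> Y" "y \<in> Y" "x < y" "x' \<in> Y" "y' \<in> Y" "x' < y'" for x y x' y'
  proof -
    have "F {x,y} = F {x',y'}" using hom that by (metis less_irrefl)
    moreover have "Min {x,y} = x" "Max {x,y} = y" "Min {x',y'} = x'" "Max {x',y'} = y'" using that by auto
    ultimately have "h (col x y) = h (col x' y')" unfolding F_def by simp
    then show ?thesis using injh colin by (meson inj_onD)
  qed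
  have unb: "\<exists>y\<in>Y. y > x" for x
  proof -
    have "\<forall>m. \<exists>n>m. n \<in> Y" using Y by (simp add: infinite_nat_iff_unbounded)
    then obtain y where "y > x" "y \<in> Y" by blast
    then show ?thesis by blast
  qed
  obtain x0 where x0: "x0 \<in> Y" using Y by (metis finite.emptyI ex_in_conv)
  obtain y0 where y0: "y0 \<in> Y" "y0 > x0" using unb by blast
  obtain z0 where z0: "z0 \<in> Y" "z0 > y0" using unb by blast
  have cxy: "col x0 y0 = col y0 z0" using hom2 x0 y0 z0 by blast
  show False
  proof (cases "\<forall>t\<in>U. card (cl x0 t) \<le> card (cl y0 t)")
    case True
    have kk: "kf x0 = kf y0" and RR: "Rf x0 = Rf y0" and PP: "Pf x0 = Pf y0"
      using cxy unfolding col_def by simp_all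
    have "shi_le (s x0) (s y0)"
    proof (rule compare[OF fd fd cov cov])
      show "bij_betw (gf x0) {..<kf x0} (Sf x0)" by (rule gb)
      show "bij_betw (gf y0) {..<kf x0} (Sf y0)" using gb[of y0] kk by simp
      show "\<forall>i<kf x0. \<forall>j<kf x0. ((gf x0 i, gf x0 j) \<in> arcs (s x0)) = ((gf y0 i, gf y0 j) \<in> arcs (s y0))"
      proof (intro allI impI)
        fix i j assume ij: "i < kf x0" "j < kf x0"
        have "(i,j) \<in> Rf x0 \<longleftrightarrow> (i,j) \<in> Rf y0" using RR by simp
        then show "((gf x0 i, gf x0 j) \<in> arcs (s x0)) = ((gf y0 i, gf y0 j) \<in> arcs (s y0))"
          using ij kk unfolding Rf_def by simp
      qed
      show "\<forall>t. card (vcls (s x0) (Sf x0) (gf x0) (kf x0) t) \<le> card (vcls (s y0) (Sf y0) (gf y0) (kf x0) t) \<and>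
             (vcls (s x0) (Sf x0) (gf x0) (kf x0) t = {}) = (vcls (s y0) (Sf y0) (gf y0) (kf x0) t = {})"
      proof
        fix t
        show "card (vcls (s x0) (Sf x0) (gf x0) (kf x0) t) \<le> card (vcls (s y0) (Sf y0) (gf y0) (kf x0) t) \<and>
             (vcls (s x0) (Sf x0) (gf x0) (kf x0) t = {}) = (vcls (s y0) (Sf y0) (gf y0) (kf x0) t = {})"
        proof (cases "t \<in> U")
          case True
          have "t \<in> Pf x0 \<longleftrightarrow> t \<in> Pf y0" using PP by simp
          then have "(cl x0 t = {}) = (cl y0 t = {})" using True unfolding Pf_def by simp
          moreover have "card (cl x0 t) \<le> card (cl y0 t)" using True \<open>\<forall>t\<in>U. _\<close> by blast
          ultimately show ?thesis unfolding cl_def using kk by simp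
        next
          case False
          then show ?thesis using clU[of t x0] clU[of t y0] unfolding cl_def using kk by simp
        qed
      qed
    qed
    moreover have "x0 \<noteq> y0" using y0 by simp
    ultimately show False using AC by blast
  next
    case False
    then obtain t where t: "t \<in> U" "card (cl y0 t) < card (cl x0 t)" by (meson not_le)
    have "t \<notin> snd (snd (snd (col x0 y0)))" using t unfolding col_def by simp
    then have dec: "card (cl y t) < card (cl x t)" if "x \<in> Y" "y \<in> Y" "x < y" for x y
    proof -
      have "col x y = col x0 y0" using hom2 that x0 y0 by blast
      then have "t \<notin> snd (snd (snd (col x y)))" using \<open>t \<notin> snd (snd (snd (col x0 y0)))\<close> by simp
      then show ?thesis using t(1) unfolding col_def by simp
    qed
    obtain xm where xm: "xm \<in> Y" "\<forall>y. y \<in> Y \<longrightarrow> card (cl xm t) \<le> card (cl y t)"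
      using ex_has_least_nat[of "\<lambda>x. x \<in> Y" x0 "\<lambda>x. card (cl x t)"] x0 by blast
    obtain ym where ym: "ym \<in> Y" "ym > xm" using unb by blast
    have "card (cl ym t) < card (cl xm t)" using dec xm ym by blast
    moreover have "card (cl xm t) \<le> card (cl ym t)" using xm ym by blast
    ultimately show False by simp
  qed
qed


theorem theorem4p3:
  assumes "finite_digraph D"
  shows "dg_wqo_class (Av D) \<longleftrightarrow> (\<exists>n\<ge>1. dg_iso D (complete_digraph n))"
proof
  assume W: "dg_wqo_class (Av D)"
  show "\<exists>n\<ge>1. dg_iso D (complete_digraph n)"
  proof (rule ccontr)
    assume "\<not> (\<exists>n\<ge>1. dg_iso D (complete_digraph n))"
    then have "\<not> dg_wqo_class (Av D)" by (rule partB[OF assms])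
    then show False using W by simp
  qed
next
  assume "\<exists>n\<ge>1. dg_iso D (complete_digraph n)"
  then obtain n where n1: "n \<ge> 1" and iso: "dg_iso D (complete_digraph n)" by blast
  have vK: "verts (complete_digraph n) = {1..n}" and aK: "arcs (complete_digraph n) = {1..n} \<times> {1..n}"
    by (simp_all add: complete_digraph_def verts_def arcs_def)
  obtain g where g: "bij_betw g (verts D) {1..n}"
    and ga: "\<forall>x\<in>verts D. \<forall>y\<in>verts D. (x, y) \<in> arcs D \<longleftrightarrow> (g x, g y) \<in> {1..n} \<times> {1..n}"
    using iso unfolding dg_iso_def vK aK by blast
  have fin: "finite (verts D)" and aD: "arcs D \<subseteq> verts D \<times> verts D"
    using assms unfolding finite_digraph_def by blast+
  have gm: "\<forall>x\<in>verts D. g x \<in> {1..n}" using bij_betwE[OF g] .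
  have V1: "arcs D = verts D \<times> verts D"
  proof
    show "arcs D \<subseteq> verts D \<times> verts D" by (rule aD)
    show "verts D \<times> verts D \<subseteq> arcs D"
    proof
      fix p assume "p \<in> verts D \<times> verts D"
      then obtain x y where "p = (x,y)" "x \<in> verts D" "y \<in> verts D" by blast
      then show "p \<in> arcs D" using ga gm by simp
    qed
  qed
  have V2: "card (verts D) = n" using bij_betw_same_card[OF g] by simp
  show "dg_wqo_class (Av D)"
    unfolding dg_wqo_class_def
  proof (intro conjI notI)
    assume "\<exists>s :: nat \<Rightarrow> dg. (\<forall>i. s i \<in> Av D) \<and> (\<forall>i. shi_le (s (Suc i)) (s i) \<and> \<not> shi_le (s i) (s (Suc i)))"
    then obtain s :: "nat \<Rightarrow> dg" where s: "\<forall>i. s i \<in> Av D" "\<forall>i. shi_le (s (Suc i)) (s i) \<and> \<not> shi_le (s i) (s (Suc i))"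
      by blast
    have "\<forall>i. finite_digraph (s i)" using s(1) by (simp add: Av_def)
    then show False using no_desc s(2) by blast
  next
    assume "\<exists>s :: nat \<Rightarrow> dg. (\<forall>i. s i \<in> Av D) \<and> (\<forall>i j. i \<noteq> j \<longrightarrow> \<not> shi_le (s i) (s j))"
    then obtain s :: "nat \<Rightarrow> dg" where s: "\<forall>i. s i \<in> Av D" "\<forall>i j. i \<noteq> j \<longrightarrow> \<not> shi_le (s i) (s j)"
      by blast
    show False by (rule no_antichain[OF V1 V2 n1 fin s(1) s(2)])
  qed
qed

end
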